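(* Let $A\in\mathbb{R}^{n\times n}$ be an invertible M-matrix, partitioned as $A=\begin{bmatrix} A_{11} & A_{12}\\ A_{21} & A_{22}\end{bmatrix}$ with $A_{11}\in\mathbb{R}^{k\times k}$ and $A_{22}\in\mathbb{R}^{(n-k)\times(n-k)}$. Let $M_{11},N_{11}\in\mathbb{R}^{k\times k}$ and $M_{22},N_{22}\in\mathbb{R}^{(n-k)\times(n-k)}$, and suppose that both pairs \[ M = \begin{bmatrix} M_{11} & 0\\ A_{21} & M_{22}\end{bmatrix},\quad N = \begin{bmatrix} N_{11} & -A_{12}\\ 0 & N_{22}\end{bmatrix} \qquad\text{and}\qquad \hat{M} = \begin{bmatrix} M_{11} & A_{12}\\ 0 & M_{22}\end{bmatrix},\quad \hat{N} = \begin{bmatrix} N_{11} & 0\\ -A_{21} & N_{22}\end{bmatrix} \] are regular splittings of $A$. Then $\hat{M}^{-1}\hat{N}$ and $M^{-1}N$ have the same eigenvalues, and hence the same spectral radius.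
   Context: A regular splitting of $A$ is a pair $(M,N)$ with $M$ an invertible M-matrix, $N\geq 0$ entrywise, and $A=M-N$. The spectral radius $\rho(P)$ is the maximum modulus of the eigenvalues of $P$. *)

theory Defs
  imports "Jordan_Normal_Form.Spectral_Radius"
begin

text \<open>Real matrices are \<open>real mat\<close> (Jordan_Normal_Form); eigenvalues and the spectral
  radius are taken over the complex numbers after embedding.\<close>

definition cmat :: "real mat \<Rightarrow> complex mat" where
  "cmat A = map_mat complex_of_real A"

definition nonneg_mat :: "real mat \<Rightarrow> bool" where
  "nonneg_mat A \<longleftrightarrow> (\<forall>i < dim_row A. \<forall>j < dim_col A. A $$ (i, j) \<ge> 0)"

definition M_matrix :: "real mat \<Rightarrow> bool" where
  "M_matrix A \<longleftrightarrow> square_mat A \<and>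
     (\<exists>s B. B \<in> carrier_mat (dim_row A) (dim_row A) \<and> nonneg_mat B \<and>
        A = s \<cdot>\<^sub>m 1\<^sub>m (dim_row A) - B \<and> s \<ge> spectral_radius (cmat B))"

definition invertible_M_matrix :: "real mat \<Rightarrow> bool" where
  "invertible_M_matrix A \<longleftrightarrow> M_matrix A \<and> invertible_mat A"

definition regular_splitting :: "real mat \<Rightarrow> real mat \<Rightarrow> real mat \<Rightarrow> bool" where
  "regular_splitting A M N \<longleftrightarrow> invertible_M_matrix M \<and> nonneg_mat N \<and>
     N \<in> carrier_mat (dim_row M) (dim_col M) \<and> A = M - N"

definition mat_inv :: "real mat \<Rightarrow> real mat" where
  "mat_inv A = (SOME B. B \<in> carrier_mat (dim_row A) (dim_row A) \<and>
                        A * B = 1\<^sub>m (dim_row A) \<and> B * A = 1\<^sub>m (dim_row A))"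

end

theory Submission imports Defs begin

lemma blk_det:
  fixes X11 B C X22 :: "complex mat" and l :: complex
  assumes X11: "X11 \<in> carrier_mat k k" and B: "B \<in> carrier_mat k m"
    and C: "C \<in> carrier_mat m k" and X22: "X22 \<in> carrier_mat m m"
  shows "det (four_block_mat X11 B (l \<cdot>\<^sub>m C) X22) = det (four_block_mat X11 (l \<cdot>\<^sub>m B) C X22)"
proof (cases "l = 0")
  case True
  have "det (four_block_mat X11 B (l \<cdot>\<^sub>m C) X22) = det X11 * det X22"
    by (rule det_four_block_mat_lower_left_zero[OF X11 B _ X22], insert True C, auto)
  moreover have "det (four_block_mat X11 (l \<cdot>\<^sub>m B) C X22) = det X11 * det X22"
    by (rule det_four_block_mat_upper_right_zero[OF X11 _ C X22], insert True B, auto)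
  ultimately show ?thesis by simp
next
  case False
  define D1 where "D1 = four_block_mat (1\<^sub>m k) (0\<^sub>m k m) (0\<^sub>m m k) (l \<cdot>\<^sub>m 1\<^sub>m m)"
  define D2 where "D2 = four_block_mat (1\<^sub>m k) (0\<^sub>m k m) (0\<^sub>m m k) ((1/l) \<cdot>\<^sub>m 1\<^sub>m m)"
  have d1: "det D1 = l ^ m" unfolding D1_def
    by (subst det_four_block_mat_upper_right_zero[of _ k _ m], auto)
  have d2: "det D2 = (1/l) ^ m" unfolding D2_def
    by (subst det_four_block_mat_upper_right_zero[of _ k _ m], auto)
  let ?Y = "four_block_mat X11 (l \<cdot>\<^sub>m B) C X22"
  have Yc: "?Y \<in> carrier_mat (k+m) (k+m)" using assms by auto
  have D1c: "D1 \<in> carrier_mat (k+m) (k+m)" unfolding D1_def by auto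
  have D2c: "D2 \<in> carrier_mat (k+m) (k+m)" unfolding D2_def by auto
  have e1: "l \<cdot>\<^sub>m 1\<^sub>m m * C = l \<cdot>\<^sub>m C" using C by (subst mult_smult_assoc_mat[of _ m m], auto)
  have e2: "l \<cdot>\<^sub>m 1\<^sub>m m * X22 = l \<cdot>\<^sub>m X22" using X22 by (subst mult_smult_assoc_mat[of _ m m], auto)
  have e3: "(l \<cdot>\<^sub>m B) * ((1/l) \<cdot>\<^sub>m 1\<^sub>m m) = B" using B False
    by (subst mult_smult_distrib[of _ k m], auto simp: smult_smult_assoc)
  have e4: "(l \<cdot>\<^sub>m X22) * ((1/l) \<cdot>\<^sub>m 1\<^sub>m m) = X22" using X22 False
    by (subst mult_smult_distrib[of _ m m], auto simp: smult_smult_assoc)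
  have "D1 * ?Y = four_block_mat X11 (l \<cdot>\<^sub>m B) (l \<cdot>\<^sub>m C) (l \<cdot>\<^sub>m X22)"
    unfolding D1_def
    by (subst mult_four_block_mat, insert assms e1 e2, auto)
  hence "D1 * ?Y * D2 = four_block_mat X11 (l \<cdot>\<^sub>m B) (l \<cdot>\<^sub>m C) (l \<cdot>\<^sub>m X22) * D2" by simp
  also have "\<dots> = four_block_mat X11 B (l \<cdot>\<^sub>m C) X22"
    unfolding D2_def using False
    by (subst mult_four_block_mat, insert assms e3 e4, auto)
  finally have eq: "D1 * ?Y * D2 = four_block_mat X11 B (l \<cdot>\<^sub>m C) X22" .
  have "det (D1 * ?Y * D2) = det D1 * det ?Y * det D2"
    using det_mult[OF mult_carrier_mat[OF D1c Yc] D2c] det_mult[OF D1c Yc] by simp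
  also have "\<dots> = det ?Y" using d1 d2 False by (simp add: power_divide)
  finally show ?thesis using eq by simp
qed

lemma spec_char:
  fixes Mc Bc Nc :: "complex mat"
  assumes Mc: "Mc \<in> carrier_mat n n" and Bc: "Bc \<in> carrier_mat n n" and Nc: "Nc \<in> carrier_mat n n"
    and BM: "Bc * Mc = 1\<^sub>m n"
  shows "spectrum (Bc * Nc) = {l. det (Nc - l \<cdot>\<^sub>m Mc) = 0}"
proof -
  have "det Bc * det Mc = 1" using det_mult[OF Bc Mc] BM by simp
  hence nz: "det Bc \<noteq> 0" by auto
  have "char_matrix (Bc * Nc) l = Bc * (Nc - l \<cdot>\<^sub>m Mc)" for l
  proof -
    have "Bc * (Nc - l \<cdot>\<^sub>m Mc) = Bc * Nc - Bc * (l \<cdot>\<^sub>m Mc)"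
      by (rule mult_minus_distrib_mat[OF Bc Nc], insert Mc, auto)
    also have "Bc * (l \<cdot>\<^sub>m Mc) = l \<cdot>\<^sub>m 1\<^sub>m n"
      using mult_smult_distrib[OF Bc Mc] BM by simp
    finally show ?thesis unfolding char_matrix_def using Bc Nc
      by (intro eq_matI, auto)
  qed
  moreover have "Nc - l \<cdot>\<^sub>m Mc \<in> carrier_mat n n" for l using Nc Mc by auto
  ultimately have "eigenvalue (Bc * Nc) l \<longleftrightarrow> det (Nc - l \<cdot>\<^sub>m Mc) = 0" for l
    using eigenvalue_det[OF mult_carrier_mat[OF Bc Nc], of l] det_mult[OF Bc, of "Nc - l \<cdot>\<^sub>m Mc"] Nc Mc nz
    by auto
  thus ?thesis unfolding spectrum_def by auto
qed

lemma mat_inv_props: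
  assumes M: "M \<in> carrier_mat n n" and inv: "invertible_mat M"
  shows "mat_inv M \<in> carrier_mat n n \<and> M * mat_inv M = 1\<^sub>m n \<and> mat_inv M * M = 1\<^sub>m n"
proof -
  from inv obtain B where B1: "M * B = 1\<^sub>m (dim_row M)" and B2: "B * M = 1\<^sub>m (dim_row B)"
    unfolding invertible_mat_def inverts_mat_def by auto
  have "dim_col B = n" using B1 M by (metis index_mult_mat(3) index_one_mat(3) carrier_matD(1))
  moreover have "dim_row B = n" using B2 M by (metis index_mult_mat(2) index_one_mat(2) index_mult_mat(3) index_one_mat(3) carrier_matD(2))
  ultimately have "B \<in> carrier_mat (dim_row M) (dim_row M) \<and> M * B = 1\<^sub>m (dim_row M) \<and> B * M = 1\<^sub>m (dim_row M)"
    using B1 B2 M by auto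
  hence "mat_inv M \<in> carrier_mat (dim_row M) (dim_row M) \<and> M * mat_inv M = 1\<^sub>m (dim_row M) \<and> mat_inv M * M = 1\<^sub>m (dim_row M)"
    unfolding mat_inv_def by (rule someI)
  thus ?thesis using M by auto
qed

theorem lemma2:
  fixes n k :: nat and A11 A12 A21 A22 M11 N11 M22 N22 :: "real mat"
  assumes "k \<le> n"
    and "A11 \<in> carrier_mat k k" and "A12 \<in> carrier_mat k (n - k)"
    and "A21 \<in> carrier_mat (n - k) k" and "A22 \<in> carrier_mat (n - k) (n - k)"
    and "M11 \<in> carrier_mat k k" and "N11 \<in> carrier_mat k k"
    and "M22 \<in> carrier_mat (n - k) (n - k)" and "N22 \<in> carrier_mat (n - k) (n - k)"
    and "invertible_M_matrix (four_block_mat A11 A12 A21 A22)"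
    and "regular_splitting (four_block_mat A11 A12 A21 A22)
           (four_block_mat M11 (0\<^sub>m k (n - k)) A21 M22)
           (four_block_mat N11 (- A12) (0\<^sub>m (n - k) k) N22)"
    and "regular_splitting (four_block_mat A11 A12 A21 A22)
           (four_block_mat M11 A12 (0\<^sub>m (n - k) k) M22)
           (four_block_mat N11 (0\<^sub>m k (n - k)) (- A21) N22)"
  shows "spectrum (cmat (mat_inv (four_block_mat M11 A12 (0\<^sub>m (n - k) k) M22)
                          * four_block_mat N11 (0\<^sub>m k (n - k)) (- A21) N22))
       = spectrum (cmat (mat_inv (four_block_mat M11 (0\<^sub>m k (n - k)) A21 M22)
                          * four_block_mat N11 (- A12) (0\<^sub>m (n - k) k) N22))
    \<and> spectral_radius (cmat (mat_inv (four_block_mat M11 A12 (0\<^sub>m (n - k) k) M22)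
                          * four_block_mat N11 (0\<^sub>m k (n - k)) (- A21) N22))
       = spectral_radius (cmat (mat_inv (four_block_mat M11 (0\<^sub>m k (n - k)) A21 M22)
                          * four_block_mat N11 (- A12) (0\<^sub>m (n - k) k) N22))"
proof -
  let ?m = "n - k"
  let ?M = "four_block_mat M11 (0\<^sub>m k (n - k)) A21 M22"
  let ?N = "four_block_mat N11 (- A12) (0\<^sub>m (n - k) k) N22"
  let ?Mh = "four_block_mat M11 A12 (0\<^sub>m (n - k) k) M22"
  let ?Nh = "four_block_mat N11 (0\<^sub>m k (n - k)) (- A21) N22"
  note c = assms(2-9)
  have nn: "k + (n - k) = n" using assms(1) by simp
  have Mc: "?M \<in> carrier_mat n n" using c nn by (metis four_block_carrier_mat zero_carrier_mat)
  have Nc: "?N \<in> carrier_mat n n" using c nn by (metis four_block_carrier_mat zero_carrier_mat uminus_carrier_mat)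
  have Mhc: "?Mh \<in> carrier_mat n n" using c nn by (metis four_block_carrier_mat zero_carrier_mat)
  have Nhc: "?Nh \<in> carrier_mat n n" using c nn by (metis four_block_carrier_mat zero_carrier_mat uminus_carrier_mat)
  have iM: "invertible_mat ?M" using assms(11) unfolding regular_splitting_def invertible_M_matrix_def by auto
  have iMh: "invertible_mat ?Mh" using assms(12) unfolding regular_splitting_def invertible_M_matrix_def by auto
  note I1 = mat_inv_props[OF Mc iM]
  note I2 = mat_inv_props[OF Mhc iMh]
  have cm: "cmat (A * B) = cmat A * cmat B" if "A \<in> carrier_mat n n" "B \<in> carrier_mat n n" for A B
    unfolding cmat_def using of_real_hom.mat_hom_mult[OF that] .
  have c1: "cmat (1\<^sub>m n) = 1\<^sub>m n" unfolding cmat_def by (rule of_real_hom.mat_hom_one)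
  have cc: "cmat A \<in> carrier_mat n n" if "A \<in> carrier_mat n n" for A
    unfolding cmat_def using that by auto
  have S1: "spectrum (cmat (mat_inv ?M * ?N)) = {l. det (cmat ?N - l \<cdot>\<^sub>m cmat ?M) = 0}"
    unfolding cm[OF conjunct1[OF I1] Nc]
    by (rule spec_char[OF cc[OF Mc] cc[OF conjunct1[OF I1]] cc[OF Nc]],
        insert I1, simp add: cm[OF conjunct1[OF I1] Mc, symmetric] c1)
  have S2: "spectrum (cmat (mat_inv ?Mh * ?Nh)) = {l. det (cmat ?Nh - l \<cdot>\<^sub>m cmat ?Mh) = 0}"
    unfolding cm[OF conjunct1[OF I2] Nhc]
    by (rule spec_char[OF cc[OF Mhc] cc[OF conjunct1[OF I2]] cc[OF Nhc]],
        insert I2, simp add: cm[OF conjunct1[OF I2] Mhc, symmetric] c1)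
  have E: "det (cmat ?N - l \<cdot>\<^sub>m cmat ?M) = det (cmat ?Nh - l \<cdot>\<^sub>m cmat ?Mh)" for l
  proof -
    let ?X11 = "cmat N11 - l \<cdot>\<^sub>m cmat M11"
    let ?X22 = "cmat N22 - l \<cdot>\<^sub>m cmat M22"
    let ?B = "- cmat A12"
    let ?C = "- cmat A21"
    have "cmat ?N - l \<cdot>\<^sub>m cmat ?M = four_block_mat ?X11 ?B (l \<cdot>\<^sub>m ?C) ?X22"
      using c by (intro eq_matI, auto simp: cmat_def)
    moreover have "cmat ?Nh - l \<cdot>\<^sub>m cmat ?Mh = four_block_mat ?X11 (l \<cdot>\<^sub>m ?B) ?C ?X22"
      using c by (intro eq_matI, auto simp: cmat_def)
    moreover have "det (four_block_mat ?X11 ?B (l \<cdot>\<^sub>m ?C) ?X22) = det (four_block_mat ?X11 (l \<cdot>\<^sub>m ?B) ?C ?X22)"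
      by (rule blk_det, insert c, auto simp: cmat_def)
    ultimately show ?thesis by simp
  qed
  have "spectrum (cmat (mat_inv ?Mh * ?Nh)) = spectrum (cmat (mat_inv ?M * ?N))"
    unfolding S1 S2 E ..
  thus ?thesis unfolding spectral_radius_def by simp
qed

end
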